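(* Let $f\in\mathbb{F}_2((T^{-1}))$ be the unique solution with $|f|<1$ of the equation $$X^4+X+\frac{T}{T^4+1}=0.$$ Then $\mu(f)=3$.
   Context: Fix a real $|T|>1$; the absolute value on $\mathbb{F}_2((T^{-1}))$ is $|g|=|T|^{-i_0}$ where $T^{-i_0}$ is the leading term of $g\ne0$, so $|P/Q|=|T|^{\deg P-\deg Q}$. (The equation has exactly one solution in $\{|g|<1\}$.) The irrationality exponent $\mu(f)$ is the supremum of real $\tau$ such that $|f-P/Q|<|Q|^{-\tau}$ has infinitely many solutions $(P,Q)\in\mathbb{F}_2[T]^2$, $Q\ne0$. *)

theory Defs
  imports Complex_Main "HOL-Library.Z2" "HOL-Library.Extended_Real"
    "HOL-Computational_Algebra.Formal_Laurent_Series"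
    "HOL-Computational_Algebra.Polynomial"
begin

text \<open>F_2((T^{-1})) is modelled as formal Laurent series over the field bit = F_2
  in the variable x = T^{-1}; hence T itself is fls_X_inv.\<close>

definition TT :: "bit fls" where
  "TT = fls_X_inv"

definition poly_fls :: "bit poly \<Rightarrow> bit fls" where
  "poly_fls P = poly (map_poly fls_const P) TT"

definition abs_T :: "real \<Rightarrow> bit fls \<Rightarrow> real" where
  "abs_T t g = (if g = 0 then 0 else t powr (- real_of_int (fls_subdegree g)))"

definition irrat_exp :: "real \<Rightarrow> bit fls \<Rightarrow> ereal" where
  "irrat_exp t f = Sup {ereal tau | tau.
     infinite {(P, Q). Q \<noteq> 0 \<and>
       abs_T t (f - poly_fls P / poly_fls Q) < abs_T t (poly_fls Q) powr (- tau)}}"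

end

theory Submission
  imports Defs
begin

lemma bit_add_self: "(x::bit) + x = 0"
  by (cases x) auto

lemma fls_add_self: "(x::bit fls) + x = 0"
  by (intro fls_eqI) (simp add: bit_add_self)

lemma fls_uminus_bit: "- (x::bit fls) = x"
  using fls_add_self[of x] by (metis add.inverse_unique)

lemma fls_minus_bit: "(x::bit fls) - y = x + y"
  by (metis diff_conv_add_uminus fls_uminus_bit)

lemma frob2: "((a::bit fls) + b)^2 = a^2 + b^2"
proof -
  have "(a+b)^2 = a^2 + b^2 + (a*b + a*b)" by (simp add: power2_eq_square algebra_simps)
  thus ?thesis by (simp add: fls_add_self)
qed

lemma frob4: "((a::bit fls) + b)^4 = a^4 + b^4"
proof -
  have "(a+b)^4 = ((a+b)^2)^2" by (simp flip: power_mult)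
  also have "\<dots> = (a^2)^2 + (b^2)^2" by (simp add: frob2)
  finally show ?thesis by (simp flip: power_mult)
qed

lemma poly_fls_pCons: "poly_fls (pCons a p) = fls_const a + TT * poly_fls p"
  by (simp add: poly_fls_def map_poly_pCons)

lemma poly_fls_0[simp]: "poly_fls 0 = 0"
  by (simp add: poly_fls_def)

lemma poly_fls_add: "poly_fls (p + q) = poly_fls p + poly_fls q"
proof (induction p arbitrary: q)
  case 0 thus ?case by simp
next
  case (pCons a p)
  show ?case
  proof (cases q)
    case pCons': (pCons b q')
    have "poly_fls (pCons a p + q) = poly_fls (pCons (a+b) (p+q'))" using pCons' by simp
    also have "\<dots> = fls_const a + fls_const b + TT * (poly_fls p + poly_fls q')"
      by (simp only: poly_fls_pCons pCons.IH fls_plus_const)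
    finally show ?thesis using pCons' by (simp add: poly_fls_pCons algebra_simps)
  qed
qed

lemma poly_fls_smult: "poly_fls (smult c p) = fls_const c * poly_fls p"
  by (induction p) (auto simp: poly_fls_pCons algebra_simps)

lemma poly_fls_mult: "poly_fls (p * q) = poly_fls p * poly_fls q"
  by (induction p) (auto simp: poly_fls_pCons algebra_simps poly_fls_add poly_fls_smult)

lemma poly_fls_1[simp]: "poly_fls 1 = 1"
  by (simp add: poly_fls_def)

lemma poly_fls_X: "poly_fls [:0,1:] = TT"
  by (simp add: poly_fls_pCons[of 0] poly_fls_pCons[of 1 0])

lemma poly_fls_power: "poly_fls (p ^ n) = poly_fls p ^ n"
  by (induction n) (auto simp: poly_fls_mult)

lemma poly_fls_deg: "p \<noteq> 0 \<Longrightarrow> poly_fls p \<noteq> 0 \<and> fls_subdegree (poly_fls p) = - int (degree p)"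
proof (induction p)
  case 0 thus ?case by simp
next
  case (pCons a p)
  show ?case
  proof (cases "p = 0")
    case True
    with pCons have "a \<noteq> 0" by auto
    with True show ?thesis by (simp add: poly_fls_pCons fls_const_nonzero)
  next
    case False
    with pCons.IH have ih: "poly_fls p \<noteq> 0" "fls_subdegree (poly_fls p) = - int (degree p)" by auto
    have tt: "TT \<noteq> 0" "fls_subdegree TT = -1" by (auto simp: TT_def)
    have nz: "TT * poly_fls p \<noteq> 0" using ih tt by simp
    have sd: "fls_subdegree (TT * poly_fls p) = -1 - int (degree p)" using ih tt by simp
    have "fls_subdegree (fls_const a + TT * poly_fls p) = -1 - int (degree p)"
      using fls_subdegree_add_eq2[OF nz, of "fls_const a"] sd by simp
    moreover have "fls_const a + TT * poly_fls p \<noteq> 0"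
    proof
      assume "fls_const a + TT * poly_fls p = 0"
      hence "TT * poly_fls p = - fls_const a" by (simp add: eq_neg_iff_add_eq_0 add.commute)
      hence "fls_subdegree (TT * poly_fls p) = 0" by simp
      with sd show False by simp
    qed
    ultimately show ?thesis using False by (simp add: poly_fls_pCons)
  qed
qed

lemma poly_fls_uminus: "poly_fls (- p) = - poly_fls p"
proof -
  have "-p = p" by (intro poly_eqI) simp
  thus ?thesis using fls_uminus_bit by metis
qed

lemma poly_fls_diff: "poly_fls (p - q) = poly_fls p - poly_fls q"
  using poly_fls_add[of p "-q"] by (simp add: poly_fls_uminus)

lemma poly_fls_inj: "poly_fls p = poly_fls q \<Longrightarrow> p = q"
  using poly_fls_deg[of "p - q"] by (auto simp: poly_fls_diff)

definition Qn :: "nat \<Rightarrow> bit poly" where "Qn n = [:1,1:] ^ (4^n)"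

fun Pn :: "nat \<Rightarrow> bit poly" where
  "Pn 0 = 0"
| "Pn (Suc n) = Pn n * Qn n ^ 3 + [:0,1:] ^ (4^n)"

definition uu :: "bit fls" where "uu = TT / (TT^4 + 1)"

definition fn :: "nat \<Rightarrow> bit fls" where "fn n = poly_fls (Pn n) / poly_fls (Qn n)"

lemma Qn_nz: "Qn n \<noteq> 0" by (simp add: Qn_def)

lemma Qn_deg: "degree (Qn n) = 4^n"
  by (simp add: Qn_def degree_power_eq)

lemma Qn_Suc: "Qn (Suc n) = Qn n ^ 4"
  by (simp add: Qn_def power_mult[symmetric] mult.commute)

lemma Pn_1: "n > 0 \<Longrightarrow> poly (Pn n) 1 = 1"
proof (cases n)
  case (Suc m)
  have "poly (Qn m) 1 = 0" by (simp add: Qn_def bit_add_self)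
  thus ?thesis using Suc by simp
qed simp

lemma poly_fls_Qn_nz: "poly_fls (Qn n) \<noteq> 0"
  using poly_fls_deg[OF Qn_nz] by simp

lemma TT4_1: "(TT + 1)^4 = TT^4 + 1"
  using frob4[of TT 1] by simp

lemma poly_fls_Qn_Suc: "poly_fls (Qn (Suc n)) = (TT^4 + 1) ^ (4^n)"
proof -
  have "poly_fls [:1,1:] = TT + 1" by (simp add: poly_fls_pCons[of 1] poly_fls_pCons[of 1 0] algebra_simps)
  hence "poly_fls (Qn (Suc n)) = (TT+1)^(4 * 4^n)" by (simp add: Qn_def poly_fls_power)
  also have "\<dots> = ((TT+1)^4)^(4^n)" by (simp add: power_mult)
  finally show ?thesis by (simp add: TT4_1)
qed

lemma fn_0: "fn 0 = 0" by (simp add: fn_def)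

lemma fn_Suc: "fn (Suc n) = fn n + uu ^ (4^n)"
proof -
  define q where "q = poly_fls (Qn n)"
  define p where "p = poly_fls (Pn n)"
  have q: "q \<noteq> 0" using poly_fls_Qn_nz q_def by simp
  have q4: "q^4 = (TT^4 + 1) ^ (4^n)"
    using poly_fls_Qn_Suc[of n] by (simp add: q_def Qn_Suc poly_fls_power)
  have "fn (Suc n) = (p * q^3 + TT^(4^n)) / q^4"
    by (simp add: fn_def p_def q_def Qn_Suc poly_fls_power poly_fls_add poly_fls_mult poly_fls_X)
  also have "\<dots> = p / q + TT^(4^n) / q^4" using q by (simp add: field_simps power_eq_if)
  also have "\<dots> = fn n + uu ^ (4^n)" by (simp only: fn_def p_def[symmetric] q_def[symmetric] uu_def power_divide q4)
  finally show ?thesis .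
qed

lemma TT_nz: "TT \<noteq> 0" and TT_sd: "fls_subdegree TT = -1"
  by (auto simp: TT_def)

lemma TT41: "TT^4 + 1 \<noteq> 0 \<and> fls_subdegree (TT^4 + 1) = -4"
proof -
  have a: "TT^4 \<noteq> 0" "fls_subdegree (TT^4) = -4" using TT_nz TT_sd by (auto simp: fls_subdegree_pow)
  have b: "fls_subdegree (TT^4 + 1) = -4" using fls_subdegree_add_eq1[OF a(1), of 1] a(2) by simp
  moreover have "TT^4 + 1 \<noteq> 0" using b by (metis fls_zero_subdegree zero_neq_neg_numeral)
  ultimately show ?thesis by simp
qed

lemma uu_nz: "uu \<noteq> 0" and uu_sd: "fls_subdegree uu = 3"
  using TT41 TT_nz TT_sd by (auto simp: uu_def fls_divide_subdegree)

lemma sd_frob: "h \<noteq> 0 \<Longrightarrow> fls_subdegree h \<ge> 1 \<Longrightarrow> fls_subdegree ((h::bit fls)^4 + h) = fls_subdegree h"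
  by (rule fls_subdegree_add_eq2) (auto simp: fls_subdegree_pow)

lemma g_props:
  assumes eq: "f^4 + f + uu = 0" and fnz: "f \<noteq> 0" and sdf: "fls_subdegree f \<ge> 1"
  shows "(f - fn n)^4 + (f - fn n) = uu^(4^n) \<and> f - fn n \<noteq> 0 \<and> fls_subdegree (f - fn n) = 3 * 4^n"
proof (induction n)
  case 0
  have "f^4 + f = uu" using eq by (metis add_eq_0_iff fls_uminus_bit)
  moreover have "fls_subdegree f = 3" using sd_frob[OF fnz sdf] calculation uu_sd by simp
  ultimately show ?case using fnz by (simp add: fn_0)
next
  case (Suc n)
  define g where "g = f - fn n"
  define w where "w = uu^(4^n)"
  have IH: "g^4 + g = w" "g \<noteq> 0" "fls_subdegree g = 3 * 4^n"
    using Suc.IH by (auto simp: g_def w_def)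
  have wnz: "w \<noteq> 0" using uu_nz by (simp add: w_def)
  have wsd: "fls_subdegree w = 3 * 4^n" using uu_sd by (simp add: w_def fls_subdegree_pow)
  have g': "f - fn (Suc n) = g + w" by (simp add: fn_Suc g_def w_def fls_minus_bit algebra_simps)
  have e: "(g + w)^4 + (g + w) = uu^(4^Suc n)"
  proof -
    have "(g + w)^4 + (g + w) = (g^4 + g) + w^4 + w" by (simp add: frob4 algebra_simps)
    also have "\<dots> = w^4 + (w + w)" using IH(1) by (simp add: algebra_simps)
    also have "\<dots> = w^4" by (simp add: fls_add_self)
    also have "\<dots> = uu^(4^Suc n)" by (simp add: w_def power_mult[symmetric] mult.commute)
    finally show ?thesis .
  qed
  have nz: "g + w \<noteq> 0"
  proof
    assume "g + w = 0" with e uu_nz show False by simp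
  qed
  have "fls_subdegree (g + w) \<ge> 1"
    using fls_plus_subdegree[OF nz] IH(3) wsd by (smt (verit) min_def one_le_power power_0 zero_le_power)
  hence "fls_subdegree (g + w) = fls_subdegree (uu^(4^Suc n))"
    using sd_frob[OF nz] e by simp
  hence "fls_subdegree (g + w) = 3 * 4^Suc n" using uu_sd by (simp add: fls_subdegree_pow)
  thus ?case using g' e nz by simp
qed

lemma lin_dvd: "[:1,1:]^m dvd A * B \<Longrightarrow> poly A 1 \<noteq> 0 \<Longrightarrow> [:1,1:]^m dvd (B::bit poly)"
proof (induction m arbitrary: B)
  case 0 thus ?case by simp
next
  case (Suc m)
  have "[:1,1:] dvd A * B" using Suc.prems(1) by (metis dvd_trans dvd_triv_left power_Suc)
  hence "poly (A * B) (-1) = 0" by (simp only: dvd_iff_poly_eq_0)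
  hence "poly B (-1) = 0" using Suc.prems(2) by simp
  hence "[:1,1:] dvd B" by (simp only: dvd_iff_poly_eq_0)
  then obtain B' where B: "B = [:1,1:] * B'" by (elim dvdE)
  have "[:1,1:] * [:1,1:]^m dvd [:1,1:] * (A * B')" using Suc.prems(1) B by (simp add: algebra_simps)
  hence "[:1,1:]^m dvd A * B'" by (subst (asm) dvd_times_left_cancel_iff) auto
  hence "[:1,1:]^m dvd B'" using Suc.IH Suc.prems(2) by blast
  thus ?case using B by (simp del: mult_pCons_left add: mult_dvd_mono)
qed

lemma key:
  assumes eq: "f^4 + f + uu = 0" and fnz: "f \<noteq> 0" and sdf: "fls_subdegree f \<ge> 1"
    and Q: "Q \<noteq> 0" and d: "degree Q \<ge> 1"
  shows "f - poly_fls P / poly_fls Q \<noteq> 0 \<and> fls_subdegree (f - poly_fls P / poly_fls Q) \<le> 3 * int (degree Q)"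
proof -
  define d where "d = degree Q"
  obtain n where n: "4^n \<le> 2*d" "2*d < 4^(n+1)"
    using ex_power_ivl1[of 4 "2*d"] d d_def by auto
  define r where "r = poly_fls P / poly_fls Q"
  define G where "G = f - fn n"
  have G: "G \<noteq> 0" "fls_subdegree G = 3 * 4^n" using g_props[OF eq fnz sdf, of n] by (auto simp: G_def)
  have Qf: "poly_fls Q \<noteq> 0" "fls_subdegree (poly_fls Q) = - int d" using poly_fls_deg[OF Q] d_def by auto
  have Qnf: "poly_fls (Qn n) \<noteq> 0" "fls_subdegree (poly_fls (Qn n)) = - int (4^n)"
    using poly_fls_deg[OF Qn_nz, of n] by (auto simp: Qn_deg)
  show ?thesis
  proof (cases "r = fn n")
    case True
    have "4^n \<le> d"
    proof (cases n)
      case 0 thus ?thesis using d d_def by simp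
    next
      case (Suc m)
      have "poly_fls P * poly_fls (Qn n) = poly_fls (Pn n) * poly_fls Q"
        using True Qf Qnf by (simp add: r_def fn_def frac_eq_eq)
      hence "P * Qn n = Pn n * Q" by (metis poly_fls_inj poly_fls_mult)
      hence "Qn n dvd Pn n * Q" by (metis dvd_triv_right)
      hence "Qn n dvd Q" using lin_dvd[of "4^n" "Pn n" Q] Pn_1[of n] Suc by (simp add: Qn_def)
      hence "degree (Qn n) \<le> degree Q" using Q by (rule dvd_imp_degree_le)
      thus ?thesis by (simp add: Qn_deg d_def)
    qed
    hence "fls_subdegree (f - r) \<le> 3 * int d" using True G by (simp add: G_def)
    thus ?thesis using True G by (simp add: G_def r_def d_def)
  next
    case False
    define N where "N = P * Qn n - Pn n * Q"
    have rf: "r - fn n = poly_fls N / poly_fls (Q * Qn n)"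
      using Qf Qnf by (simp add: r_def fn_def N_def poly_fls_diff poly_fls_mult field_simps)
    have N: "N \<noteq> 0" using False rf by auto
    have Nf: "poly_fls N \<noteq> 0" "fls_subdegree (poly_fls N) = - int (degree N)" using poly_fls_deg[OF N] by auto
    have QQ: "poly_fls (Q * Qn n) \<noteq> 0" "fls_subdegree (poly_fls (Q * Qn n)) = - int d - int (4^n)"
      using Qf Qnf by (auto simp: poly_fls_mult)
    have rnz: "r - fn n \<noteq> 0" using False by simp
    have sdr: "fls_subdegree (r - fn n) \<le> int d + 4^n"
      using rf Nf QQ by (simp add: fls_divide_subdegree)
    have lt: "fls_subdegree (r - fn n) < fls_subdegree G"
    proof -
      have "int d < int (2 * 4^n)" using n by (simp only: of_nat_less_iff) simp
      hence "int d + 4^n < 3 * 4^n" by simp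
      thus ?thesis using sdr G by simp
    qed
    have fr: "f - r = G - (r - fn n)" by (simp add: G_def)
    have sdfr: "fls_subdegree (f - r) = fls_subdegree (r - fn n)"
      using fls_subdegree_diff_eq2[OF rnz lt] by (simp only: fr)
    have "f - r \<noteq> 0"
    proof
      assume "f - r = 0"
      hence "G = r - fn n" using fr by simp
      with lt show False by simp
    qed
    moreover have "fls_subdegree (f - r) \<le> 3 * int d"
    proof -
      have "int (4^n) \<le> int (2*d)" using n(1) by (simp only: of_nat_le_iff)
      thus ?thesis using sdfr sdr by simp
    qed
    ultimately show ?thesis by (simp add: r_def d_def)
  qed
qed

lemma abs_T_nz: "h \<noteq> 0 \<Longrightarrow> abs_T t h = t powr (- real_of_int (fls_subdegree h))"
  by (simp add: abs_T_def)

lemma abs_T_Q: "Q \<noteq> 0 \<Longrightarrow> abs_T t (poly_fls Q) = t powr (real (degree Q))"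
  using poly_fls_deg[of Q] by (simp add: abs_T_def)

lemma upper_fin:
  assumes t: "t > 1" and eq: "f^4 + f + uu = 0" and fnz: "f \<noteq> 0" and sdf: "fls_subdegree f \<ge> 1"
    and tau: "tau > 3"
  shows "finite {(P, Q). Q \<noteq> 0 \<and>
       abs_T t (f - poly_fls P / poly_fls Q) < abs_T t (poly_fls Q) powr (- tau)}"
proof (rule finite_subset[of _ "{(0,1)}"])
  show "{(P, Q). Q \<noteq> 0 \<and>
       abs_T t (f - poly_fls P / poly_fls Q) < abs_T t (poly_fls Q) powr (- tau)} \<subseteq> {(0,1)}"
  proof clarify
    fix P Q :: "bit poly"
    assume Q: "Q \<noteq> 0" and lt: "abs_T t (f - poly_fls P / poly_fls Q) < abs_T t (poly_fls Q) powr (- tau)"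
    have rhs: "abs_T t (poly_fls Q) powr (- tau) = t powr (- tau * real (degree Q))"
      using abs_T_Q[OF Q] by (simp add: powr_powr mult.commute)
    show "P = 0 \<and> Q = 1"
    proof (cases "degree Q \<ge> 1")
      case True
      note k = key[OF eq fnz sdf Q True, of P]
      define h where "h = f - poly_fls P / poly_fls Q"
      have "abs_T t h = t powr (- real_of_int (fls_subdegree h))" using k by (simp add: abs_T_nz h_def)
      also have "\<dots> \<ge> t powr (- tau * real (degree Q))"
      proof -
        have "real_of_int (fls_subdegree h) \<le> 3 * real (degree Q)" using k h_def
          by (metis of_int_le_iff of_int_mult of_int_of_nat_eq of_int_numeral)
        moreover have "3 * real (degree Q) \<le> tau * real (degree Q)" using tau True
          by (intro mult_right_mono) auto
        ultimately show ?thesis using t by (intro powr_mono) auto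
      qed
      finally show ?thesis using lt rhs h_def by simp
    next
      case False
      hence d0: "degree Q = 0" by simp
      then obtain c where c: "Q = [:c:]" by (metis degree_eq_zeroE)
      with Q have "c = 1" by (cases c) auto
      with c have Q1: "Q = 1" by (simp add: one_pCons)
      have "P = 0"
      proof (rule ccontr)
        assume P: "P \<noteq> 0"
        have Pf: "poly_fls P \<noteq> 0" "fls_subdegree (poly_fls P) = - int (degree P)" using poly_fls_deg[OF P] by auto
        have lt2: "fls_subdegree (poly_fls P) < fls_subdegree f" using Pf sdf by simp
        have sdd: "fls_subdegree (f - poly_fls P) = - int (degree P)"
          using fls_subdegree_diff_eq2[OF Pf(1) lt2] Pf by simp
        have nz: "f - poly_fls P \<noteq> 0" using lt2 by auto
        have "abs_T t (f - poly_fls P) = t powr (real (degree P))" using nz sdd by (simp add: abs_T_def)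
        also have "\<dots> \<ge> 1" using t by (intro ge_one_powr_ge_zero) auto
        finally show False using lt rhs Q1 d0 t by simp
      qed
      thus ?thesis using Q1 by simp
    qed
  qed
qed simp

lemma lower_inf:
  assumes t: "t > 1" and eq: "f^4 + f + uu = 0" and fnz: "f \<noteq> 0" and sdf: "fls_subdegree f \<ge> 1"
    and tau: "tau < 3"
  shows "infinite {(P, Q). Q \<noteq> 0 \<and>
       abs_T t (f - poly_fls P / poly_fls Q) < abs_T t (poly_fls Q) powr (- tau)}"
proof -
  have inj: "inj (\<lambda>n. (Pn n, Qn n))"
  proof (rule injI)
    fix m n assume "(Pn m, Qn m) = (Pn n, Qn n)"
    hence "degree (Qn m) = degree (Qn n)" by simp
    thus "m = n" by (simp add: Qn_deg)
  qed
  have "range (\<lambda>n. (Pn n, Qn n)) \<subseteq> {(P, Q). Q \<noteq> 0 \<and>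
       abs_T t (f - poly_fls P / poly_fls Q) < abs_T t (poly_fls Q) powr (- tau)}"
  proof clarify
    fix n
    have g: "f - fn n \<noteq> 0" "fls_subdegree (f - fn n) = 3 * 4^n" using g_props[OF eq fnz sdf, of n] by auto
    have "abs_T t (f - poly_fls (Pn n) / poly_fls (Qn n)) = t powr (- (3 * 4^n))"
      using g by (simp add: abs_T_def fn_def)
    also have "\<dots> < t powr (- tau * 4^n)"
    proof -
      have "tau * 4^n < 3 * 4^n" using tau by simp
      thus ?thesis using t by simp
    qed
    also have "\<dots> = abs_T t (poly_fls (Qn n)) powr (- tau)"
      using abs_T_Q[OF Qn_nz, of t n] by (simp add: powr_powr Qn_deg mult.commute)
    finally show "Qn n \<noteq> 0 \<and> abs_T t (f - poly_fls (Pn n) / poly_fls (Qn n)) < abs_T t (poly_fls (Qn n)) powr (- tau)"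
      using Qn_nz by simp
  qed
  thus ?thesis using range_inj_infinite[OF inj] infinite_super by blast
qed

theorem proposition5p2:
  fixes t :: real and f :: "bit fls"
  assumes "t > 1"
    and "f ^ 4 + f + TT / (TT ^ 4 + 1) = 0"
    and "abs_T t f < 1"
  shows "irrat_exp t f = 3"
proof -
  have eq: "f^4 + f + uu = 0" using assms(2) by (simp add: uu_def)
  have fnz: "f \<noteq> 0" using eq uu_nz by auto
  have sdf: "fls_subdegree f \<ge> 1"
  proof -
    have h: "t powr (- real_of_int (fls_subdegree f)) < 1" using assms(3) fnz by (simp add: abs_T_def)
    have "t powr (- real_of_int (fls_subdegree f)) < t powr 0" using h assms(1) by simp
    hence "- real_of_int (fls_subdegree f) < 0" by (simp only: powr_less_cancel_iff[OF assms(1)])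
    thus ?thesis by simp
  qed
  let ?A = "{ereal tau | tau. infinite {(P, Q). Q \<noteq> 0 \<and>
       abs_T t (f - poly_fls P / poly_fls Q) < abs_T t (poly_fls Q) powr (- tau)}}"
  have "Sup ?A = 3"
  proof (rule antisym)
    show "Sup ?A \<le> 3"
    proof (rule Sup_least, clarify)
      fix tau :: real
      assume "infinite {(P, Q). Q \<noteq> 0 \<and>
       abs_T t (f - poly_fls P / poly_fls Q) < abs_T t (poly_fls Q) powr (- tau)}"
      hence "\<not> tau > 3" using upper_fin[OF assms(1) eq fnz sdf] by blast
      thus "ereal tau \<le> 3" by simp
    qed
  next
    show "3 \<le> Sup ?A"
    proof (subst le_Sup_iff, intro allI impI)
      fix y :: ereal assume "y < 3"
      then obtain r where r: "y < ereal r" "ereal r < 3" using ereal_dense2 by blast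
      have "r < 3" using r(2) by simp
      hence "ereal r \<in> ?A" using lower_inf[OF assms(1) eq fnz sdf] by blast
      thus "\<exists>a\<in>?A. y < a" using r(1) by blast
    qed
  qed
  thus ?thesis by (simp add: irrat_exp_def)
qed

end
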